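(* Let $(x_n)_{n \in \mathbb{N}}$ be a sequence in $[0,1)$ with the following property: there exist $s \in \mathbb{N}$ and a positive real number $\gamma$ such that for infinitely many $N$ the point set $x_1, \ldots, x_N$ has a subset $x_{j_1}, \ldots, x_{j_M}$ with $M \geq \gamma N$ elements which has at most $s$ different distances between neighbouring elements. Then $(x_n)_{n \in \mathbb{N}}$ does not have Poissonian pair correlations.
   Context: For real $x$, $\|x\|$ denotes the distance from $x$ to the nearest integer. A sequence $(x_n)_{n\in\mathbb{N}}$ in $[0,1)$ has Poissonian pair correlations if for every $s \geq 0$, $$F_N(s) := \frac{1}{N}\#\left\{1 \leq l \neq m \leq N : \|x_l - x_m\| \leq \frac{s}{N}\right\} \to 2s \quad (N\to\infty).$$ For a finite point set in $[0,1)$, the distances between neighbouring elements (gaps) are the distances between consecutive points when the set is arranged in increasing order. *)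

theory Defs
  imports Complex_Main
begin

definition dist_int :: "real \<Rightarrow> real" where
  "dist_int t = min (frac t) (1 - frac t)"

text \<open>Pair correlation counting function F_N(s), sequence indexed from 1.\<close>
definition pair_corr :: "(nat \<Rightarrow> real) \<Rightarrow> nat \<Rightarrow> real \<Rightarrow> real" where
  "pair_corr x N s = real (card {(l, m). l \<in> {1..N} \<and> m \<in> {1..N} \<and> l \<noteq> m \<and>
       dist_int (x l - x m) \<le> s / real N}) / real N"

definition poissonian_pair_corr :: "(nat \<Rightarrow> real) \<Rightarrow> bool" where
  "poissonian_pair_corr x \<longleftrightarrow> (\<forall>s::real. s \<ge> 0 \<longrightarrow> (\<lambda>N. pair_corr x N s) \<longlonglongrightarrow> 2 * s)"

definition gaps :: "(nat \<Rightarrow> real) \<Rightarrow> nat set \<Rightarrow> real set" where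
  "gaps x J = (let ys = sort (map x (sorted_list_of_set J))
               in {ys ! (i + 1) - ys ! i | i. i + 1 < length ys})"

end

theory Submission
  imports Defs
begin

definition AP :: "(nat \<Rightarrow> real) \<Rightarrow> nat \<Rightarrow> real \<Rightarrow> (nat \<times> nat) set" where
  "AP x N t = {(l, m). l \<in> {1..N} \<and> m \<in> {1..N} \<and> l \<noteq> m \<and>
       dist_int (x l - x m) \<le> t / real N}"

lemma AP_finite: "finite (AP x N t)"
  by (rule finite_subset[of _ "{1..N} \<times> {1..N}"]) (auto simp: AP_def)

lemma AP_mono: "a \<le> b \<Longrightarrow> N > 0 \<Longrightarrow> AP x N a \<subseteq> AP x N b"
  unfolding AP_def by (auto intro: order_trans[OF _ divide_right_mono])

lemma pair_corr_AP: "pair_corr x N t = real (card (AP x N t)) / real N"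
  unfolding pair_corr_def AP_def by simp

lemma map_insort_key: "map f (insort_key f a ys) = insort (f a) (map f ys)"
  by (induction ys) auto

lemma map_sort_key: "map f (sort_key f xs) = sort (map f xs)"
  by (induction xs) (auto simp: map_insort_key)

lemma dist_int_small: "0 \<le> g \<Longrightarrow> g \<le> 1/2 \<Longrightarrow> dist_int g = g"
proof -
  assume "0 \<le> g" "g \<le> 1/2"
  then have "frac g = g" by (simp add: frac_eq)
  then show ?thesis using \<open>g \<le> 1/2\<close> by (simp add: dist_int_def)
qed

lemma dist_int_nonneg: "dist_int t \<ge> 0"
  unfolding dist_int_def using frac_lt_1[of t] frac_ge_0[of t] by simp

lemma key:
  fixes x :: "nat \<Rightarrow> real" and \<epsilon> u c :: real
  assumes x01: "\<And>n. n \<ge> 1 \<Longrightarrow> x n \<in> {0..<1}"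
    and J: "J \<subseteq> {1..N}" and N: "N > 0" and u: "u > 0" "u / real N \<le> 1/2" and eps: "\<epsilon> > 0"
    and G: "card (gaps x J) \<le> s"
    and bnd: "\<And>k. k \<le> nat \<lceil>u/\<epsilon>\<rceil> \<Longrightarrow> real (card (AP x N (real (k+1) * \<epsilon>)))
        - (if k = 0 then 0 else real (card (AP x N ((real k - 1) * \<epsilon>)))) \<le> c"
    and c: "c \<ge> 0"
  shows "real (card J) - 1 - real N / u \<le> real s * c"
proof -
  have finJ: "finite J" using J finite_subset by blast
  define L where "L = sorted_list_of_set J"
  define \<sigma> where "\<sigma> = sort_key x L"
  define ys where "ys = map x \<sigma>"
  define n where "n = length \<sigma>"
  have dist\<sigma>: "distinct \<sigma>" unfolding \<sigma>_def L_def by simp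
  have set\<sigma>: "set \<sigma> = J" unfolding \<sigma>_def L_def using finJ by simp
  have ncard: "n = card J" unfolding n_def \<sigma>_def L_def by simp
  have lenys: "length ys = n" unfolding ys_def n_def by simp
  have ys_sort: "sort (map x L) = ys" unfolding ys_def \<sigma>_def by (simp add: map_sort_key)
  define g where "g i = ys ! (i+1) - ys ! i" for i
  have gapsJ: "gaps x J = {g i | i. i + 1 < n}"
    unfolding gaps_def Let_def L_def[symmetric] ys_sort g_def lenys ..
  have sorted_ys: "sorted ys" unfolding ys_def \<sigma>_def by simp
  have g_nonneg: "g i \<ge> 0" if "i + 1 < n" for i
    using sorted_ys that lenys unfolding g_def by (simp add: sorted_iff_nth_mono)
  have ys_in: "ys ! i \<in> {0..<1}" if "i < n" for i
  proof -
    have "\<sigma> ! i \<in> J" using that set\<sigma> n_def nth_mem by blast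
    then have "\<sigma> ! i \<ge> 1" using J by auto
    then show ?thesis using x01 that n_def unfolding ys_def by simp
  qed
  show ?thesis
  proof (cases "n = 0")
    case True
    have "0 \<le> real s * c" using c by simp
    moreover have "0 \<le> real N / u" using u by simp
    ultimately show ?thesis using ncard True by simp
  next
    case False
    define m where "m = n - 1"
    have nm: "n = m + 1" using False m_def by simp
    have tele: "(\<Sum>i<m. g i) = ys ! m - ys ! 0"
      unfolding g_def using sum_lessThan_telescope[of "\<lambda>i. ys ! i" m] by simp
    have sumle: "(\<Sum>i<m. g i) \<le> 1" using tele ys_in[of m] ys_in[of 0] nm by auto
    define B where "B = {i. i < m \<and> g i > u / real N}"
    define S where "S = {i. i < m \<and> g i \<le> u / real N}"
    have finB: "finite B" and finS: "finite S" unfolding B_def S_def by auto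
    have "real (card B) * (u / real N) = (\<Sum>i\<in>B. u / real N)" by simp
    also have "\<dots> \<le> (\<Sum>i\<in>B. g i)" using finB by (intro sum_mono) (auto simp: B_def)
    also have "\<dots> \<le> (\<Sum>i<m. g i)"
      by (intro sum_mono2) (auto simp: B_def nm g_nonneg)
    finally have "real (card B) * (u / real N) \<le> 1" using sumle by linarith
    then have cardB: "real (card B) \<le> real N / u" using u N by (simp add: field_simps)
    have "S \<union> B = {..<m}" "S \<inter> B = {}" unfolding S_def B_def by auto
    then have "card S + card B = m" using card_Un_disjoint[OF finS finB] by simp
    then have cardS1: "real (card S) \<ge> real (card J) - 1 - real N / u"
      using cardB ncard nm by linarith
    define Sg where "Sg g0 = {i \<in> S. g i = g0}" for g0
    have "{g i | i. i + 1 < n} = g ` {..<m}" unfolding nm by auto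
    then have finG: "finite (gaps x J)" unfolding gapsJ by simp
    have SU: "S \<subseteq> (\<Union>g0\<in>gaps x J. Sg g0)"
      unfolding Sg_def S_def gapsJ nm by auto
    have cSg: "real (card (Sg g0)) \<le> c" for g0
    proof (cases "Sg g0 = {}")
      case True then show ?thesis using c by simp
    next
      case False
      then obtain i0 where i0: "i0 \<in> Sg g0" by blast
      have g0: "0 \<le> g0" "g0 \<le> u / real N"
        using i0 g_nonneg[of i0] unfolding Sg_def S_def nm by auto
      define k where "k = nat \<lfloor>g0 * real N / \<epsilon>\<rfloor>"
      have q0: "g0 * real N / \<epsilon> \<ge> 0" using g0 eps by simp
      have kle: "real k \<le> g0 * real N / \<epsilon>" "g0 * real N / \<epsilon> < real k + 1"
        unfolding k_def using q0 by linarith+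
      have "g0 * real N / \<epsilon> \<le> u / \<epsilon>"
        using g0 N eps by (simp add: divide_right_mono field_simps)
      then have kK: "k \<le> nat \<lceil>u/\<epsilon>\<rceil>" unfolding k_def
        by (metis ceiling_mono floor_le_ceiling le_floor_iff le_nat_floor nat_mono of_int_floor_le order_trans)
      have k1: "real k * \<epsilon> \<le> g0 * real N" "g0 * real N < (real k + 1) * \<epsilon>"
        using kle eps by (simp_all add: field_simps)
      define P where "P = AP x N (real (k+1) * \<epsilon>) - (if k = 0 then {} else AP x N ((real k - 1) * \<epsilon>))"
      define \<phi> where "\<phi> i = (\<sigma> ! (i+1), \<sigma> ! i)" for i
      have inj: "inj_on \<phi> (Sg g0)"
        unfolding inj_on_def \<phi>_def Sg_def S_def
        using dist\<sigma> nm n_def by (auto simp: nth_eq_iff_index_eq)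
      have img: "\<phi> ` (Sg g0) \<subseteq> P"
      proof
        fix p assume "p \<in> \<phi> ` Sg g0"
        then obtain i where i: "i \<in> Sg g0" and p: "p = \<phi> i" by blast
        have im: "i < m" "g i = g0" using i unfolding Sg_def S_def by auto
        have mem: "\<sigma> ! (i+1) \<in> J" "\<sigma> ! i \<in> J"
          using im nm n_def set\<sigma> nth_mem by (metis add_less_cancel_right less_SucI add.commute plus_1_eq_Suc)+
        have ne: "\<sigma> ! (i+1) \<noteq> \<sigma> ! i"
          using dist\<sigma> im nm n_def by (simp add: nth_eq_iff_index_eq)
        have diff: "x (\<sigma> ! (i+1)) - x (\<sigma> ! i) = g0"
          using im nm n_def unfolding g_def ys_def by simp
        have half: "g0 \<le> 1/2" using g0 u by linarith
        have dd: "dist_int (x (\<sigma> ! (i+1)) - x (\<sigma> ! i)) = g0"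
          using diff dist_int_small[OF g0(1) half] by simp
        have up: "g0 \<le> real (k+1) * \<epsilon> / real N"
          using k1 N by (simp add: field_simps)
        have low: "k \<noteq> 0 \<Longrightarrow> \<not> g0 \<le> (real k - 1) * \<epsilon> / real N"
          using k1 N eps by (simp add: field_simps)
        show "p \<in> P" unfolding p \<phi>_def P_def AP_def
          using mem J ne dd up low by auto
      qed
      have "card (Sg g0) = card (\<phi> ` Sg g0)" using inj by (simp add: card_image)
      also have "\<dots> \<le> card P" using img by (intro card_mono) (auto simp: P_def AP_finite)
      finally have cP: "real (card (Sg g0)) \<le> real (card P)" by simp
      have "real (card P) = real (card (AP x N (real (k+1) * \<epsilon>)))
        - (if k = 0 then 0 else real (card (AP x N ((real k - 1) * \<epsilon>))))"
      proof (cases "k = 0")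
        case True then show ?thesis unfolding P_def by simp
      next
        case False
        have sub: "AP x N ((real k - 1) * \<epsilon>) \<subseteq> AP x N (real (k+1) * \<epsilon>)"
          using eps N by (intro AP_mono) (auto simp: field_simps)
        have e1: "card (AP x N (real (k+1) * \<epsilon>) - AP x N ((real k - 1) * \<epsilon>)) =
          card (AP x N (real (k+1) * \<epsilon>)) - card (AP x N ((real k - 1) * \<epsilon>))"
          by (rule card_Diff_subset[OF AP_finite sub])
        have e2: "card (AP x N ((real k - 1) * \<epsilon>)) \<le> card (AP x N (real (k+1) * \<epsilon>))"
          by (rule card_mono[OF AP_finite sub])
        show ?thesis using False unfolding P_def by (simp only: e1 of_nat_diff[OF e2] if_False)
      qed
      then show ?thesis using cP bnd[OF kK] by linarith
    qed
    have "card S \<le> card (\<Union>g0\<in>gaps x J. Sg g0)"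
      using SU finG by (intro card_mono) (auto simp: Sg_def finS)
    also have "\<dots> \<le> (\<Sum>g0\<in>gaps x J. card (Sg g0))" by (rule card_UN_le[OF finG])
    finally have "real (card S) \<le> (\<Sum>g0\<in>gaps x J. real (card (Sg g0)))"
      by (simp flip: of_nat_sum)
    also have "\<dots> \<le> real (card (gaps x J)) * c"
      using sum_bounded_above[of "gaps x J" "\<lambda>g0. real (card (Sg g0))" c] cSg by simp
    also have "\<dots> \<le> real s * c" using G c by (simp add: mult_right_mono)
    finally show ?thesis using cardS1 by linarith
  qed
qed

theorem proposition1:
  fixes x :: "nat \<Rightarrow> real" and s :: nat and \<gamma> :: real
  assumes "\<And>n. n \<ge> 1 \<Longrightarrow> x n \<in> {0..<1}"
    and "\<gamma> > 0"
    and "infinite {N. \<exists>J. J \<subseteq> {1..N} \<and> real (card J) \<ge> \<gamma> * real N \<and> card (gaps x J) \<le> s}"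
  shows "\<not> poissonian_pair_corr x"
proof
  assume P: "poissonian_pair_corr x"
  note x01 = assms(1) and g = assms(2) and inf = assms(3)
  define u where "u = 4 / \<gamma>"
  define \<epsilon> where "\<epsilon> = \<gamma> / (20 * (real s + 1))"
  define K where "K = nat \<lceil>u/\<epsilon>\<rceil>"
  have u: "u > 0" using g by (simp add: u_def)
  have eps: "\<epsilon> > 0" using g by (simp add: \<epsilon>_def)
  have lim: "\<And>t. t \<ge> 0 \<Longrightarrow> (\<lambda>N. pair_corr x N t) \<longlonglongrightarrow> 2 * t"
    using P unfolding poissonian_pair_corr_def by blast
  have ev1: "eventually (\<lambda>N. pair_corr x N (real (k+1) * \<epsilon>)
      - (if k = 0 then 0 else pair_corr x N ((real k - 1) * \<epsilon>)) < 5 * \<epsilon>) sequentially" for k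
  proof (cases "k = 0")
    case True
    have "(\<lambda>N. pair_corr x N (real (k+1) * \<epsilon>)) \<longlonglongrightarrow> 2 * (real (k+1) * \<epsilon>)"
      using eps by (intro lim) simp
    moreover have "2 * (real (k+1) * \<epsilon>) < 5 * \<epsilon>" using True eps by simp
    ultimately show ?thesis using True by (simp add: order_tendstoD(2))
  next
    case False
    have "(\<lambda>N. pair_corr x N (real (k+1) * \<epsilon>) - pair_corr x N ((real k - 1) * \<epsilon>))
       \<longlonglongrightarrow> 2 * (real (k+1) * \<epsilon>) - 2 * ((real k - 1) * \<epsilon>)"
      using eps False by (intro tendsto_diff lim) auto
    moreover have "2 * (real (k+1) * \<epsilon>) - 2 * ((real k - 1) * \<epsilon>) < 5 * \<epsilon>"
      using eps by (simp add: algebra_simps)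
    ultimately show ?thesis using False by (simp add: order_tendstoD(2))
  qed
  have "eventually (\<lambda>N. \<forall>k\<in>{..K}. pair_corr x N (real (k+1) * \<epsilon>)
      - (if k = 0 then 0 else pair_corr x N ((real k - 1) * \<epsilon>)) < 5 * \<epsilon>) sequentially"
    by (rule eventually_ball_finite) (simp, intro ballI ev1)
  then obtain N0 where N0: "\<And>N k. N \<ge> N0 \<Longrightarrow> k \<le> K \<Longrightarrow> pair_corr x N (real (k+1) * \<epsilon>)
      - (if k = 0 then 0 else pair_corr x N ((real k - 1) * \<epsilon>)) < 5 * \<epsilon>"
    unfolding eventually_sequentially by auto
  define N1 where "N1 = max N0 (nat \<lceil>2 * u\<rceil> + nat \<lceil>3 / \<gamma>\<rceil> + 1)"
  have "\<not> (\<forall>n\<in>{N. \<exists>J. J \<subseteq> {1..N} \<and> real (card J) \<ge> \<gamma> * real N \<and> card (gaps x J) \<le> s}. n \<le> N1)"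
    using inf unfolding finite_nat_set_iff_bounded_le by blast
  then obtain N where "N > N1" and exJ: "\<exists>J. J \<subseteq> {1..N} \<and> real (card J) \<ge> \<gamma> * real N \<and> card (gaps x J) \<le> s"
    unfolding Ball_def mem_Collect_eq not_all not_imp not_le by blast
  then have NN1: "N \<ge> N1" by simp
  from exJ obtain J where J: "J \<subseteq> {1..N}" "real (card J) \<ge> \<gamma> * real N" "card (gaps x J) \<le> s" by blast
  have NN0: "N \<ge> N0" using NN1 unfolding N1_def by simp
  have N2u: "real N \<ge> 2 * u" using NN1 unfolding N1_def by linarith
  have N3: "real N \<ge> 3 / \<gamma>" using NN1 unfolding N1_def by linarith
  have Npos: "N > 0" using NN1 unfolding N1_def by simp
  have uN: "u / real N \<le> 1/2" using N2u u Npos by (simp add: field_simps)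
  have bnd: "real (card (AP x N (real (k+1) * \<epsilon>)))
        - (if k = 0 then 0 else real (card (AP x N ((real k - 1) * \<epsilon>)))) \<le> 5 * \<epsilon> * real N"
    if "k \<le> nat \<lceil>u/\<epsilon>\<rceil>" for k
  proof -
    have lt: "pair_corr x N (real (k+1) * \<epsilon>)
      - (if k = 0 then 0 else pair_corr x N ((real k - 1) * \<epsilon>)) < 5 * \<epsilon>"
      using N0[OF NN0] that K_def by blast
    have "real (card (AP x N (real (k+1) * \<epsilon>)))
        - (if k = 0 then 0 else real (card (AP x N ((real k - 1) * \<epsilon>))))
       = real N * (pair_corr x N (real (k+1) * \<epsilon>)
      - (if k = 0 then 0 else pair_corr x N ((real k - 1) * \<epsilon>)))"
      using Npos by (simp add: pair_corr_AP algebra_simps)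
    also have "\<dots> \<le> real N * (5 * \<epsilon>)" using lt Npos by (intro mult_left_mono) auto
    finally show ?thesis by (simp only: mult.commute)
  qed
  have ke: "real (card J) - 1 - real N / u \<le> real s * (5 * \<epsilon> * real N)"
    by (rule key[OF x01 J(1) Npos u uN eps J(3) bnd]) (use eps in auto)
  have "real s * (5 * \<epsilon>) \<le> \<gamma> / 4"
    using g unfolding \<epsilon>_def by (simp add: field_simps)
  then have "real s * (5 * \<epsilon> * real N) \<le> \<gamma> / 4 * real N"
  proof -
    have "real s * (5 * \<epsilon> * real N) = (real s * (5 * \<epsilon>)) * real N" by simp
    also have "\<dots> \<le> \<gamma> / 4 * real N" using mult_right_mono[OF \<open>real s * (5 * \<epsilon>) \<le> \<gamma> / 4\<close>, of "real N"] by simp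
    finally show ?thesis .
  qed
  moreover have "real N / u = \<gamma> / 4 * real N" unfolding u_def using g by (simp add: field_simps)
  ultimately have "\<gamma> * real N \<le> 1 + \<gamma> / 2 * real N" using ke J(2) by linarith
  then have "\<gamma> * real N \<le> 2" by linarith
  moreover have "\<gamma> * real N \<ge> 3" using N3 g by (simp add: field_simps)
  ultimately show False by linarith
qed

end
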